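(* Let $A=(Q,q_0,\Sigma,\delta,\alpha)$ with $Q_d$ be an LDBA and $\mathsf{Ord}$ an ordering of its states w.r.t. $Q_d$, and let $B$ be the deterministic parity automaton constructed from $A$ and $\mathsf{Ord}$ as described in the context. Then $\mathsf L(A)=\mathsf L(B)$.
   Context: A (transition-based) nondeterministic Büchi automaton is $A=(Q,q_0,\Sigma,\delta,\alpha)$ with finite $Q$, $q_0\in Q$, finite alphabet $\Sigma$, total $\delta\subseteq Q\times\Sigma\times Q$, accepting transitions $\alpha\subseteq\delta$; a run is accepting if it uses transitions of $\alpha$ infinitely often, and $\mathsf L(A)$ is the set of words with an accepting run. An LDBA additionally has $Q_d\subseteq Q$ with (1) $\alpha\subseteq Q_d\times\Sigma\times Q_d$; (2) each $q\in Q_d$ has exactly one $\sigma$-successor $\delta(q,\sigma)$ for each $\sigma$; (3) successors of states in $Q_d$ lie in $Q_d$. Assume $q_0\notin Q_d$ and write $\overline{Q_d}=Q\setminus Q_d$. For $S\subseteq Q$, $\mathsf{post}^\sigma_\delta(S)=\{q'\mid\exists q\in S:(q,\sigma,q')\in\delta\}$. An ordering w.r.t. $Q_d$ is $\mathsf{Ord}:Q\to\{1,\dots,|Q_d|,+\infty\}$ with value $+\infty$ exactly on $\overline{Q_d}$ and injective on $Q_d$. A deterministic parity automaton (DPA) $(Q',q_0',\Sigma,\delta',p)$ has a deterministic total transition function and a coloring $p$ assigning an integer to each transition; a word is accepted iff on its (unique) run the minimal color occurring infinitely often is even. For a finite set $S$, $\mathcal{OP}(S)$ is the set of pairs $(t,<)$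 with $t\subseteq S$ and $<$ a strict total order on $t$; $\mathsf{Ind}_{(t,<)}(e)$ is the position of $e\in t$ in $<$ (minimum has index 1). The DPA $B=(Q^B,q^B_0,\Sigma,\delta^B,p)$: $Q^B=\mathcal P(\overline{Q_d})\times\mathcal{OP}(Q_d)$, $q^B_0=(\{q_0\},(\emptyset,\emptyset))$. For a state $(s_1,(t_1,<_1))$ and $\sigma\in\Sigma$, $\delta^B((s_1,(t_1,<_1)),\sigma)=(s_2,(t_2,<_2))$ where $s_2=\mathsf{post}^\sigma_\delta(s_1)\cap\overline{Q_d}$, $t_2=\mathsf{post}^\sigma_\delta(s_1\cup t_1)\cap Q_d$, and for $q_1,q_2\in t_2$, $q_1<_2q_2$ iff one of: (a) neither $q_1$ nor $q_2$ equals $\delta(q',\sigma)$ for any $q'\in t_1$, and $\mathsf{Ord}(q_1)<\mathsf{Ord}(q_2)$; (b) $q_1=\delta(q_1',\sigma)$ for some $q_1'\in t_1$ but $q_2$ is not $\delta(q',\sigma)$ for any $q'\in t_1$; (c) both have such predecessors in $t_1$ and $\min_{<_1}\{q'\in t_1\mid\delta(q',\sigma)=q_1\}<_1\min_{<_1}\{q'\in t_1\mid\delta(q',\sigma)=q_2\}$. Coloring of this transition: let $\mathsf{Dec}(t_1)=\{q\in t_1\mid \mathsf{Ind}_{(t_2,<_2)}(\delta(q,\sigma))<\mathsf{Ind}_{(t_1,<_1)}(q)\}$ and $\mathsf{Acc}(t_1)=\{q\in t_1\mid\exists q'\in t_2:(q,\sigma,q')\in\alpha\}$. The color is: if $\mathsf{Dec}(t_1)=\emptyset\ne\mathsf{Acc}(t_1)$: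 $2\min_{q\in\mathsf{Acc}(t_1)}\mathsf{Ind}_{(t_1,<_1)}(q)$; if $\mathsf{Dec}(t_1)\ne\emptyset=\mathsf{Acc}(t_1)$: $2\min_{q\in\mathsf{Dec}(t_1)}\mathsf{Ind}_{(t_1,<_1)}(q)-1$; if both nonempty: the minimum of these two values; if both empty: $2|Q_d|+1$. *)

theory Defs
  imports Main "HOL-Library.Extended_Nat"
begin

definition is_NBA :: "'q set \<Rightarrow> 'q \<Rightarrow> 's set \<Rightarrow> ('q \<times> 's \<times> 'q) set \<Rightarrow> ('q \<times> 's \<times> 'q) set \<Rightarrow> bool" where
  "is_NBA Q q0 \<Sigma> \<delta> \<alpha> \<longleftrightarrow>
     finite Q \<and> finite \<Sigma> \<and> q0 \<in> Q \<and> \<delta> \<subseteq> Q \<times> \<Sigma> \<times> Q \<and>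
     (\<forall>q\<in>Q. \<forall>\<sigma>\<in>\<Sigma>. \<exists>q'. (q, \<sigma>, q') \<in> \<delta>) \<and> \<alpha> \<subseteq> \<delta>"

definition is_LDBA :: "'q set \<Rightarrow> 'q \<Rightarrow> 's set \<Rightarrow> ('q \<times> 's \<times> 'q) set \<Rightarrow> ('q \<times> 's \<times> 'q) set \<Rightarrow> 'q set \<Rightarrow> bool" where
  "is_LDBA Q q0 \<Sigma> \<delta> \<alpha> Qd \<longleftrightarrow>
     is_NBA Q q0 \<Sigma> \<delta> \<alpha> \<and> Qd \<subseteq> Q \<and>
     \<alpha> \<subseteq> Qd \<times> \<Sigma> \<times> Qd \<and>
     (\<forall>q\<in>Qd. \<forall>\<sigma>\<in>\<Sigma>. \<exists>!q'. (q, \<sigma>, q') \<in> \<delta>) \<and>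
     (\<forall>q\<in>Qd. \<forall>\<sigma> q'. (q, \<sigma>, q') \<in> \<delta> \<longrightarrow> q' \<in> Qd)"

definition is_run :: "'q \<Rightarrow> ('q \<times> 's \<times> 'q) set \<Rightarrow> (nat \<Rightarrow> 's) \<Rightarrow> (nat \<Rightarrow> 'q) \<Rightarrow> bool" where
  "is_run q0 \<delta> w r \<longleftrightarrow> r 0 = q0 \<and> (\<forall>i. (r i, w i, r (Suc i)) \<in> \<delta>)"

definition nba_lang :: "'q \<Rightarrow> 's set \<Rightarrow> ('q \<times> 's \<times> 'q) set \<Rightarrow> ('q \<times> 's \<times> 'q) set \<Rightarrow> (nat \<Rightarrow> 's) set" where
  "nba_lang q0 \<Sigma> \<delta> \<alpha> = {w. (\<forall>i. w i \<in> \<Sigma>) \<and>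
      (\<exists>r. is_run q0 \<delta> w r \<and> (\<exists>\<^sub>\<infinity> i. (r i, w i, r (Suc i)) \<in> \<alpha>))}"

definition is_ordering :: "'q set \<Rightarrow> 'q set \<Rightarrow> ('q \<Rightarrow> enat) \<Rightarrow> bool" where
  "is_ordering Q Qd Ord \<longleftrightarrow>
     (\<forall>q\<in>Q. Ord q = \<infinity> \<longleftrightarrow> q \<notin> Qd) \<and>
     (\<forall>q\<in>Qd. \<exists>n::nat. Ord q = enat n \<and> 1 \<le> n \<and> n \<le> card Qd) \<and>
     inj_on Ord Qd"

fun dpa_run :: "('b \<Rightarrow> 's \<Rightarrow> 'b) \<Rightarrow> 'b \<Rightarrow> (nat \<Rightarrow> 's) \<Rightarrow> nat \<Rightarrow> 'b" where
  "dpa_run dlt q0 w 0 = q0"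
| "dpa_run dlt q0 w (Suc i) = dlt (dpa_run dlt q0 w i) (w i)"

definition dpa_lang :: "'s set \<Rightarrow> ('b \<Rightarrow> 's \<Rightarrow> 'b) \<Rightarrow> 'b \<Rightarrow> ('b \<Rightarrow> 's \<Rightarrow> int) \<Rightarrow> (nat \<Rightarrow> 's) set" where
  "dpa_lang \<Sigma> dlt q0 col = {w. (\<forall>i. w i \<in> \<Sigma>) \<and>
     (\<exists>c. even c \<and> (\<exists>\<^sub>\<infinity> i. col (dpa_run dlt q0 w i) (w i) = c) \<and>
          (\<forall>c'. (\<exists>\<^sub>\<infinity> i. col (dpa_run dlt q0 w i) (w i) = c') \<longrightarrow> c \<le> c'))}"

definition post :: "('q \<times> 's \<times> 'q) set \<Rightarrow> 's \<Rightarrow> 'q set \<Rightarrow> 'q set" where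
  "post \<delta> \<sigma> S = {q'. \<exists>q\<in>S. (q, \<sigma>, q') \<in> \<delta>}"

definition dsucc :: "('q \<times> 's \<times> 'q) set \<Rightarrow> 'q \<Rightarrow> 's \<Rightarrow> 'q" where
  "dsucc \<delta> q \<sigma> = (THE q'. (q, \<sigma>, q') \<in> \<delta>)"

definition is_OP :: "'q set \<Rightarrow> ('q set \<times> ('q \<times> 'q) set) \<Rightarrow> bool" where
  "is_OP S tR \<longleftrightarrow> (let t = fst tR; R = snd tR in
     t \<subseteq> S \<and> R \<subseteq> t \<times> t \<and> irrefl R \<and> trans R \<and> total_on t R)"

definition Ind :: "'q set \<Rightarrow> ('q \<times> 'q) set \<Rightarrow> 'q \<Rightarrow> nat" where
  "Ind t R e = card {x \<in> t. (x, e) \<in> R} + 1"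

definition minR :: "('q \<times> 'q) set \<Rightarrow> 'q set \<Rightarrow> 'q" where
  "minR R X = (THE m. m \<in> X \<and> (\<forall>y\<in>X. y \<noteq> m \<longrightarrow> (m, y) \<in> R))"

definition hasPred :: "('q \<times> 's \<times> 'q) set \<Rightarrow> 'q set \<Rightarrow> 's \<Rightarrow> 'q \<Rightarrow> bool" where
  "hasPred \<delta> t1 \<sigma> q \<longleftrightarrow> (\<exists>q'\<in>t1. dsucc \<delta> q' \<sigma> = q)"

definition minPred :: "('q \<times> 's \<times> 'q) set \<Rightarrow> 'q set \<Rightarrow> ('q \<times> 'q) set \<Rightarrow> 's \<Rightarrow> 'q \<Rightarrow> 'q" where
  "minPred \<delta> t1 R1 \<sigma> q = minR R1 {q' \<in> t1. dsucc \<delta> q' \<sigma> = q}"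

type_synonym 'q Bstate = "'q set \<times> ('q set \<times> ('q \<times> 'q) set)"

definition B_states :: "'q set \<Rightarrow> 'q set \<Rightarrow> 'q Bstate set" where
  "B_states Q Qd = {(s, tR). s \<subseteq> Q - Qd \<and> is_OP Qd tR}"

definition B_init :: "'q \<Rightarrow> 'q Bstate" where
  "B_init q0 = ({q0}, ({}, {}))"

definition B_delta :: "'q set \<Rightarrow> ('q \<times> 's \<times> 'q) set \<Rightarrow> 'q set \<Rightarrow> ('q \<Rightarrow> enat)
                       \<Rightarrow> 'q Bstate \<Rightarrow> 's \<Rightarrow> 'q Bstate" where
  "B_delta Q \<delta> Qd Ord st \<sigma> = (case st of (s1, (t1, R1)) \<Rightarrow>
     (let s2 = post \<delta> \<sigma> s1 \<inter> (Q - Qd);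
          t2 = post \<delta> \<sigma> (s1 \<union> t1) \<inter> Qd;
          hp = hasPred \<delta> t1 \<sigma>;
          mp = minPred \<delta> t1 R1 \<sigma>;
          R2 = {(q1, q2). q1 \<in> t2 \<and> q2 \<in> t2 \<and>
                 ((\<not> hp q1 \<and> \<not> hp q2 \<and> Ord q1 < Ord q2) \<or>
                  (hp q1 \<and> \<not> hp q2) \<or>
                  (hp q1 \<and> hp q2 \<and> (mp q1, mp q2) \<in> R1))}
      in (s2, (t2, R2))))"

definition B_color :: "'q set \<Rightarrow> ('q \<times> 's \<times> 'q) set \<Rightarrow> ('q \<times> 's \<times> 'q) set \<Rightarrow> 'q set \<Rightarrow> ('q \<Rightarrow> enat)
                       \<Rightarrow> 'q Bstate \<Rightarrow> 's \<Rightarrow> int" where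
  "B_color Q \<delta> \<alpha> Qd Ord st \<sigma> = (case st of (s1, (t1, R1)) \<Rightarrow>
     (case B_delta Q \<delta> Qd Ord st \<sigma> of (s2, (t2, R2)) \<Rightarrow>
       (let Dec = {q \<in> t1. Ind t2 R2 (dsucc \<delta> q \<sigma>) < Ind t1 R1 q};
            Acc = {q \<in> t1. \<exists>q'\<in>t2. (q, \<sigma>, q') \<in> \<alpha>};
            a = 2 * int (Min (Ind t1 R1 ` Acc));
            d = 2 * int (Min (Ind t1 R1 ` Dec)) - 1
        in if Dec = {} \<and> Acc \<noteq> {} then a
           else if Dec \<noteq> {} \<and> Acc = {} then d
           else if Dec \<noteq> {} \<and> Acc \<noteq> {} then min a d
           else 2 * int (card Qd) + 1)))"

end

theory Submission
  imports Defs "HOL-Library.Infinite_Set"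
begin

definition sto :: "'q set \<Rightarrow> ('q \<times> 'q) set \<Rightarrow> bool" where
  "sto t R \<longleftrightarrow> R \<subseteq> t \<times> t \<and> (\<forall>x. (x,x) \<notin> R) \<and>
     (\<forall>x y z. (x,y) \<in> R \<longrightarrow> (y,z) \<in> R \<longrightarrow> (x,z) \<in> R) \<and>
     (\<forall>x\<in>t. \<forall>y\<in>t. x \<noteq> y \<longrightarrow> (x,y) \<in> R \<or> (y,x) \<in> R)"

lemma sto_sub: "sto t R \<Longrightarrow> (x,y) \<in> R \<Longrightarrow> x \<in> t \<and> y \<in> t"
  unfolding sto_def by blast
lemma sto_irr: "sto t R \<Longrightarrow> (x,x) \<notin> R"
  unfolding sto_def by blast
lemma sto_trans: "sto t R \<Longrightarrow> (x,y) \<in> R \<Longrightarrow> (y,z) \<in> R \<Longrightarrow> (x,z) \<in> R"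
  unfolding sto_def by blast
lemma sto_tot: "sto t R \<Longrightarrow> x \<in> t \<Longrightarrow> y \<in> t \<Longrightarrow> x \<noteq> y \<Longrightarrow> (x,y) \<in> R \<or> (y,x) \<in> R"
  unfolding sto_def by blast

lemma sto_ex_min:
  assumes "sto t R" "finite X" "X \<noteq> {}" "X \<subseteq> t"
  shows "\<exists>m\<in>X. \<forall>y\<in>X. y \<noteq> m \<longrightarrow> (m,y) \<in> R"
  using assms(2,3,4)
proof (induction X rule: finite_ne_induct)
  case (singleton x) then show ?case by auto
next
  case (insert x F)
  then obtain m where m: "m \<in> F" "\<forall>y\<in>F. y \<noteq> m \<longrightarrow> (m,y) \<in> R" by auto
  have "x \<noteq> m" using insert m by auto
  hence "(x,m) \<in> R \<or> (m,x) \<in> R" using sto_tot[OF assms(1), of x m] insert m by auto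
  then show ?case
  proof
    assume xm: "(x,m) \<in> R"
    have "\<forall>y\<in>insert x F. y \<noteq> x \<longrightarrow> (x,y) \<in> R"
    proof (intro ballI impI)
      fix y assume "y \<in> insert x F" "y \<noteq> x"
      then have y: "y \<in> F" by auto
      show "(x,y) \<in> R"
      proof (cases "y = m")
        case True then show ?thesis using xm by simp
      next
        case False then show ?thesis using y m xm sto_trans[OF assms(1)] by blast
      qed
    qed
    then show ?thesis by blast
  next
    assume "(m,x) \<in> R"
    then have "\<forall>y\<in>insert x F. y \<noteq> m \<longrightarrow> (m,y) \<in> R" using m by auto
    then show ?thesis using m by blast
  qed
qed

lemma sto_minR:
  assumes "sto t R" "finite X" "X \<noteq> {}" "X \<subseteq> t"
  shows "minR R X \<in> X \<and> (\<forall>y\<in>X. y \<noteq> minR R X \<longrightarrow> (minR R X, y) \<in> R)"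
proof -
  obtain m where m: "m \<in> X" "\<forall>y\<in>X. y \<noteq> m \<longrightarrow> (m,y) \<in> R"
    using sto_ex_min[OF assms] by blast
  have "\<exists>!m. m \<in> X \<and> (\<forall>y\<in>X. y \<noteq> m \<longrightarrow> (m,y) \<in> R)"
  proof (rule ex1I[of _ m])
    show "m \<in> X \<and> (\<forall>y\<in>X. y \<noteq> m \<longrightarrow> (m,y) \<in> R)" using m by blast
  next
    fix m' assume m': "m' \<in> X \<and> (\<forall>y\<in>X. y \<noteq> m' \<longrightarrow> (m',y) \<in> R)"
    show "m' = m"
    proof (rule ccontr)
      assume "m' \<noteq> m"
      then have "(m,m') \<in> R" "(m',m) \<in> R" using m m' by auto
      then show False using sto_trans[OF assms(1)] sto_irr[OF assms(1)] by blast
    qed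
  qed
  then show ?thesis unfolding minR_def by (rule theI')
qed

lemma Ind_less:
  assumes "sto t R" "finite t" "(x,y) \<in> R"
  shows "Ind t R x < Ind t R y"
proof -
  have xy: "x \<in> t" "y \<in> t" using sto_sub[OF assms(1,3)] by auto
  have ps: "{z\<in>t. (z,x) \<in> R} \<subset> {z\<in>t. (z,y) \<in> R}"
    using assms(3) xy sto_trans[OF assms(1)] sto_irr[OF assms(1)] by blast
  have fin: "finite {z\<in>t. (z,y) \<in> R}" using assms(2) by simp
  have "card {z\<in>t. (z,x) \<in> R} < card {z\<in>t. (z,y) \<in> R}"
    using psubset_card_mono[OF fin ps] .
  then show ?thesis unfolding Ind_def by simp
qed

lemma Ind_inj:
  assumes "sto t R" "finite t" "x \<in> t" "y \<in> t" "Ind t R x = Ind t R y"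
  shows "x = y"
  using Ind_less[OF assms(1,2), of x y] Ind_less[OF assms(1,2), of y x] assms
    sto_tot[OF assms(1,3,4)] by fastforce

lemma Ind_le_card:
  assumes "sto t R" "finite t" "x \<in> t"
  shows "Ind t R x \<le> card t"
proof -
  have "{z\<in>t. (z,x) \<in> R} \<subseteq> t - {x}" using sto_irr[OF assms(1)] by auto
  then have "card {z\<in>t. (z,x) \<in> R} \<le> card (t - {x})" using assms(2) by (intro card_mono) auto
  moreover have "card (t - {x}) < card t" using card_Diff1_less[OF assms(2,3)] .
  ultimately show ?thesis unfolding Ind_def by simp
qed

lemma Ind_ge1: "Ind t R x \<ge> 1" unfolding Ind_def by simp

definition colf :: "'x set \<Rightarrow> 'x set \<Rightarrow> ('x \<Rightarrow> nat) \<Rightarrow> nat \<Rightarrow> int" where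
  "colf D A I n = (if D = {} \<and> A \<noteq> {} then 2 * int (Min (I ` A))
     else if D \<noteq> {} \<and> A = {} then 2 * int (Min (I ` D)) - 1
     else if D \<noteq> {} \<and> A \<noteq> {} then min (2 * int (Min (I ` A))) (2 * int (Min (I ` D)) - 1)
     else 2 * int n + 1)"

lemma colf_ge: "colf D A I n \<ge> -1"
  unfolding colf_def by auto

lemma colf_D: "finite D \<Longrightarrow> x \<in> D \<Longrightarrow> colf D A I n \<le> 2 * int (I x) - 1"
proof -
  assume a: "finite D" "x \<in> D"
  have "Min (I ` D) \<le> I x" using a by (intro Min_le) auto
  then have h: "int (Min (I ` D)) \<le> int (I x)" by simp
  have "D \<noteq> {}" using a by auto
  then show ?thesis unfolding colf_def using h by (simp add: min_def)
qed

lemma colf_A: "finite A \<Longrightarrow> x \<in> A \<Longrightarrow> colf D A I n \<le> 2 * int (I x)"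
proof -
  assume a: "finite A" "x \<in> A"
  have "Min (I ` A) \<le> I x" using a by (intro Min_le) auto
  then have h: "int (Min (I ` A)) \<le> int (I x)" by simp
  have "A \<noteq> {}" using a by auto
  then show ?thesis unfolding colf_def using h by (simp add: min_def)
qed

lemma colf_even: "even (colf D A I n) \<Longrightarrow> A \<noteq> {} \<and> colf D A I n = 2 * int (Min (I ` A))"
proof -
  assume e: "even (colf D A I n)"
  show ?thesis
  proof (cases "D = {}")
    case True
    then show ?thesis using e unfolding colf_def by (cases "A = {}") auto
  next
    case False
    then show ?thesis using e unfolding colf_def by (cases "A = {}") (auto simp: min_def)
  qed
qed

lemma colf_odd:
  assumes "finite D" "odd (colf D A I n)" "\<forall>x\<in>D. I x > k" "k \<le> n"
  shows "colf D A I n \<ge> 2 * int k + 1"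
proof (cases "D = {}")
  case True
  then show ?thesis using assms(2,4) unfolding colf_def by (cases "A = {}") auto
next
  case False
  have "Min (I ` D) \<in> I ` D" using False assms(1) by (intro Min_in) auto
  then have "Min (I ` D) > k" using assms(3) by auto
  then have h: "int (Min (I ` D)) \<ge> int k + 1" by simp
  show ?thesis using False assms(2) h unfolding colf_def by (cases "A = {}") (auto simp: min_def)
qed


locale ctx =
  fixes Q :: "'q set" and q0 :: 'q and \<Sigma> :: "'s set"
    and \<delta> \<alpha> :: "('q \<times> 's \<times> 'q) set" and Qd :: "'q set" and Ord :: "'q \<Rightarrow> enat"
  assumes ldba: "is_LDBA Q q0 \<Sigma> \<delta> \<alpha> Qd"
    and q0nd: "q0 \<notin> Qd"
    and ord: "is_ordering Q Qd Ord"
begin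

lemma basics: "finite Q" "q0 \<in> Q" "\<delta> \<subseteq> Q \<times> \<Sigma> \<times> Q" "\<alpha> \<subseteq> \<delta>"
  "Qd \<subseteq> Q" "\<alpha> \<subseteq> Qd \<times> \<Sigma> \<times> Qd"
  "\<forall>q\<in>Qd. \<forall>\<sigma>\<in>\<Sigma>. \<exists>!q'. (q, \<sigma>, q') \<in> \<delta>"
  "\<forall>q\<in>Qd. \<forall>\<sigma> q'. (q, \<sigma>, q') \<in> \<delta> \<longrightarrow> q' \<in> Qd"
  using ldba unfolding is_LDBA_def is_NBA_def by auto

lemma finQd: "finite Qd" using basics(1,5) finite_subset by auto
lemma ordinj: "inj_on Ord Qd" using ord unfolding is_ordering_def by auto

lemma closed: "q \<in> Qd \<Longrightarrow> (q, \<sigma>, q') \<in> \<delta> \<Longrightarrow> q' \<in> Qd"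
  using basics(8) by blast

lemma dsucc_in: "q \<in> Qd \<Longrightarrow> \<sigma> \<in> \<Sigma> \<Longrightarrow> (q, \<sigma>, dsucc \<delta> q \<sigma>) \<in> \<delta>"
  unfolding dsucc_def by (rule theI') (use basics(7) in blast)

lemma dsucc_eq: "q \<in> Qd \<Longrightarrow> \<sigma> \<in> \<Sigma> \<Longrightarrow> (q, \<sigma>, q') \<in> \<delta> \<Longrightarrow> q' = dsucc \<delta> q \<sigma>"
  using basics(7) dsucc_in[of q \<sigma>] by blast

lemma dsucc_Qd: "q \<in> Qd \<Longrightarrow> \<sigma> \<in> \<Sigma> \<Longrightarrow> dsucc \<delta> q \<sigma> \<in> Qd"
  using dsucc_in closed by blast

definition nR :: "'q set \<Rightarrow> 'q set \<Rightarrow> ('q \<times> 'q) set \<Rightarrow> 's \<Rightarrow> ('q \<times> 'q) set" where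
  "nR s1 t1 R1 \<sigma> = {(q1, q2). q1 \<in> post \<delta> \<sigma> (s1 \<union> t1) \<inter> Qd \<and> q2 \<in> post \<delta> \<sigma> (s1 \<union> t1) \<inter> Qd \<and>
                 ((\<not> hasPred \<delta> t1 \<sigma> q1 \<and> \<not> hasPred \<delta> t1 \<sigma> q2 \<and> Ord q1 < Ord q2) \<or>
                  (hasPred \<delta> t1 \<sigma> q1 \<and> \<not> hasPred \<delta> t1 \<sigma> q2) \<or>
                  (hasPred \<delta> t1 \<sigma> q1 \<and> hasPred \<delta> t1 \<sigma> q2 \<and>
                     (minPred \<delta> t1 R1 \<sigma> q1, minPred \<delta> t1 R1 \<sigma> q2) \<in> R1))}"

lemma B_delta_eq: "B_delta Q \<delta> Qd Ord (s1, t1, R1) \<sigma> =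
   (post \<delta> \<sigma> s1 \<inter> (Q - Qd), post \<delta> \<sigma> (s1 \<union> t1) \<inter> Qd, nR s1 t1 R1 \<sigma>)"
  unfolding B_delta_def nR_def Let_def by simp

context
  fixes \<sigma> :: 's and s1 t1 :: "'q set" and R1 :: "('q \<times> 'q) set"
  assumes sig: "\<sigma> \<in> \<Sigma>" and t1Qd: "t1 \<subseteq> Qd" and sto1: "sto t1 R1"
begin

abbreviation "fs q \<equiv> dsucc \<delta> q \<sigma>"
abbreviation "t2 \<equiv> post \<delta> \<sigma> (s1 \<union> t1) \<inter> Qd"
abbreviation "R2 \<equiv> nR s1 t1 R1 \<sigma>"
abbreviation "hp \<equiv> hasPred \<delta> t1 \<sigma>"
abbreviation "mp \<equiv> minPred \<delta> t1 R1 \<sigma>"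
abbreviation "gs q \<equiv> mp (fs q)"

lemma fin1: "finite t1" using t1Qd finQd finite_subset by auto

lemma fs_in: "q \<in> t1 \<Longrightarrow> fs q \<in> t2"
  using dsucc_in[of q \<sigma>] dsucc_Qd[of q \<sigma>] t1Qd sig unfolding post_def by blast

lemma hp_iff: "hp x \<longleftrightarrow> x \<in> fs ` t1"
  unfolding hasPred_def by auto

lemma mp_prop: "x \<in> fs ` t1 \<Longrightarrow>
   mp x \<in> t1 \<and> fs (mp x) = x \<and> (\<forall>y\<in>t1. fs y = x \<longrightarrow> y \<noteq> mp x \<longrightarrow> (mp x, y) \<in> R1)"
proof -
  assume x: "x \<in> fs ` t1"
  have "minR R1 {q'\<in>t1. fs q' = x} \<in> {q'\<in>t1. fs q' = x} \<and>
    (\<forall>y\<in>{q'\<in>t1. fs q' = x}. y \<noteq> minR R1 {q'\<in>t1. fs q' = x} \<longrightarrow> (minR R1 {q'\<in>t1. fs q' = x}, y) \<in> R1)"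
    using x fin1 by (intro sto_minR[OF sto1]) auto
  then show ?thesis unfolding minPred_def by auto
qed

lemma gs_prop: "q \<in> t1 \<Longrightarrow> gs q \<in> t1 \<and> fs (gs q) = fs q \<and> (gs q = q \<or> (gs q, q) \<in> R1)"
  using mp_prop[of "fs q"] by auto

lemma sto2: "sto t2 R2"
proof -
  have sub: "R2 \<subseteq> t2 \<times> t2" unfolding nR_def by auto
  have irr: "\<forall>x. (x,x) \<notin> R2" using sto_irr[OF sto1] unfolding nR_def by auto
  have tr: "\<forall>x y z. (x,y) \<in> R2 \<longrightarrow> (y,z) \<in> R2 \<longrightarrow> (x,z) \<in> R2"
  proof (intro allI impI)
    fix x y z assume a: "(x,y) \<in> R2" "(y,z) \<in> R2"
    have tr1: "(mp x, mp y) \<in> R1 \<Longrightarrow> (mp y, mp z) \<in> R1 \<Longrightarrow> (mp x, mp z) \<in> R1"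
      using sto_trans[OF sto1] by blast
    have tr2: "Ord x < Ord y \<Longrightarrow> Ord y < Ord z \<Longrightarrow> Ord x < Ord z" by (rule less_trans)
    show "(x,z) \<in> R2"
      using a unfolding nR_def
      apply simp
      apply (elim conjE disjE)
      using tr1 tr2 by auto
  qed
  have tot: "\<forall>x\<in>t2. \<forall>y\<in>t2. x \<noteq> y \<longrightarrow> (x,y) \<in> R2 \<or> (y,x) \<in> R2"
  proof (intro ballI impI)
    fix x y assume x: "x \<in> t2" and y: "y \<in> t2" and xy: "x \<noteq> y"
    show "(x,y) \<in> R2 \<or> (y,x) \<in> R2"
    proof (cases "hp x")
      case hx: True
      show ?thesis
      proof (cases "hp y")
        case hy: True
        have "mp x \<in> t1" "fs (mp x) = x" "mp y \<in> t1" "fs (mp y) = y"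
          using mp_prop hx hy hp_iff by auto
        then have "mp x \<noteq> mp y" using xy by auto
        then have "(mp x, mp y) \<in> R1 \<or> (mp y, mp x) \<in> R1"
          using sto_tot[OF sto1] \<open>mp x \<in> t1\<close> \<open>mp y \<in> t1\<close> by blast
        then show ?thesis using x y hx hy unfolding nR_def by auto
      next
        case False then show ?thesis using x y hx unfolding nR_def by auto
      qed
    next
      case hx: False
      show ?thesis
      proof (cases "hp y")
        case True then show ?thesis using x y hx unfolding nR_def by auto
      next
        case hy: False
        have "Ord x \<noteq> Ord y" using ordinj x y xy unfolding inj_on_def by auto
        then have "Ord x < Ord y \<or> Ord y < Ord x" by auto
        then show ?thesis using x y hx hy unfolding nR_def by auto
      qed
    qed
  qed
  show ?thesis unfolding sto_def using sub irr tr tot by blast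
qed

lemma Ind2: "q \<in> t1 \<Longrightarrow> Ind t2 R2 (fs q) = card {y\<in>t1. gs y = y \<and> (y, gs q) \<in> R1} + 1"
proof -
  assume q: "q \<in> t1"
  let ?F = "{y\<in>t1. gs y = y \<and> (y, gs q) \<in> R1}"
  have hq: "hp (fs q)" using q hp_iff by auto
  have eq: "{x\<in>t2. (x, fs q) \<in> R2} = fs ` ?F"
  proof
    show "{x\<in>t2. (x, fs q) \<in> R2} \<subseteq> fs ` ?F"
    proof
      fix x assume "x \<in> {x\<in>t2. (x, fs q) \<in> R2}"
      then have x: "x \<in> t2" "hp x" "(mp x, mp (fs q)) \<in> R1" using hq unfolding nR_def by auto
      then have m: "mp x \<in> t1" "fs (mp x) = x" using mp_prop hp_iff by auto
      then have "mp x \<in> ?F" using x by auto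
      then show "x \<in> fs ` ?F" using m by force
    qed
  next
    show "fs ` ?F \<subseteq> {x\<in>t2. (x, fs q) \<in> R2}"
    proof
      fix x assume "x \<in> fs ` ?F"
      then obtain y where y: "y \<in> t1" "gs y = y" "(y, gs q) \<in> R1" "x = fs y" by auto
      have "fs y \<in> t2" "fs q \<in> t2" using fs_in y q by auto
      moreover have "hp (fs y)" using y hp_iff by auto
      ultimately show "x \<in> {x\<in>t2. (x, fs q) \<in> R2}" using y hq unfolding nR_def by auto
    qed
  qed
  have inj: "inj_on fs ?F"
  proof (rule inj_onI)
    fix a b assume "a \<in> ?F" "b \<in> ?F" "fs a = fs b"
    then have "a = gs a" "b = gs b" by auto
    then show "a = b" using \<open>fs a = fs b\<close> by metis
  qed
  show ?thesis unfolding Ind_def eq card_image[OF inj] ..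
qed

lemma FsubL: "q \<in> t1 \<Longrightarrow> {y\<in>t1. gs y = y \<and> (y, gs q) \<in> R1} \<subseteq> {y\<in>t1. (y, q) \<in> R1}"
proof
  fix y assume q: "q \<in> t1" and "y \<in> {y\<in>t1. gs y = y \<and> (y, gs q) \<in> R1}"
  then have y: "y \<in> t1" "(y, gs q) \<in> R1" by auto
  have "gs q = q \<or> (gs q, q) \<in> R1" using gs_prop[OF q] by auto
  then have "(y, q) \<in> R1"
  proof
    assume "gs q = q" then show ?thesis using y by simp
  next
    assume "(gs q, q) \<in> R1" then show ?thesis using y sto_trans[OF sto1] by blast
  qed
  then show "y \<in> {y\<in>t1. (y, q) \<in> R1}" using y by auto
qed

lemma IndA: "q \<in> t1 \<Longrightarrow> Ind t2 R2 (fs q) \<le> Ind t1 R1 q"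
proof -
  assume q: "q \<in> t1"
  have "{y\<in>t1. gs y = y \<and> (y, gs q) \<in> R1} \<subseteq> {y\<in>t1. (y, q) \<in> R1}"
    using FsubL[OF q] .
  then have "card {y\<in>t1. gs y = y \<and> (y, gs q) \<in> R1} \<le> card {y\<in>t1. (y, q) \<in> R1}"
    using fin1 by (intro card_mono) auto
  then show ?thesis using Ind2[OF q] unfolding Ind_def by simp
qed

lemma notDec: "q \<in> t1 \<Longrightarrow> \<not> Ind t2 R2 (fs q) < Ind t1 R1 q \<Longrightarrow>
    gs q = q \<and> (\<forall>y\<in>t1. (y, q) \<in> R1 \<longrightarrow> gs y = y)"
proof -
  assume q: "q \<in> t1" and nd: "\<not> Ind t2 R2 (fs q) < Ind t1 R1 q"
  let ?F = "{y\<in>t1. gs y = y \<and> (y, gs q) \<in> R1}"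
  let ?L = "{y\<in>t1. (y, q) \<in> R1}"
  have sub: "?F \<subseteq> ?L" using FsubL[OF q] .
  have "card ?L \<le> card ?F" using nd Ind2[OF q] unfolding Ind_def by simp
  moreover have "card ?F \<le> card ?L" using sub fin1 by (intro card_mono) auto
  ultimately have "?F = ?L" using sub fin1 by (intro card_subset_eq) auto
  moreover have "gs q = q"
  proof (rule ccontr)
    assume ne: "gs q \<noteq> q"
    then have "gs q \<in> ?L" using gs_prop[OF q] by auto
    moreover have "gs q \<notin> ?F" using sto_irr[OF sto1] by auto
    ultimately show False using \<open>?F = ?L\<close> by blast
  qed
  ultimately show ?thesis by auto
qed

lemma Dec_up: "q \<in> t1 \<Longrightarrow> (q', q) \<in> R1 \<Longrightarrow> \<not> Ind t2 R2 (fs q) < Ind t1 R1 q \<Longrightarrow>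
    \<not> Ind t2 R2 (fs q') < Ind t1 R1 q'"
proof -
  assume q: "q \<in> t1" and qq: "(q', q) \<in> R1" and nd: "\<not> Ind t2 R2 (fs q) < Ind t1 R1 q"
  have q': "q' \<in> t1" using sto_sub[OF sto1 qq] by auto
  have h: "gs q = q" "\<forall>y\<in>t1. (y, q) \<in> R1 \<longrightarrow> gs y = y" using notDec[OF q nd] by auto
  have g': "gs q' = q'" using h q' qq by auto
  have "{y\<in>t1. gs y = y \<and> (y, gs q') \<in> R1} = {y\<in>t1. (y, q') \<in> R1}"
    using g' h(2) sto_trans[OF sto1 _ qq] by auto
  then show ?thesis using Ind2[OF q'] unfolding Ind_def by simp
qed

end

end


context ctx
begin

context
  fixes w :: "nat \<Rightarrow> 's"
  assumes wS: "\<forall>i. w i \<in> \<Sigma>"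
begin

abbreviation "st i \<equiv> dpa_run (B_delta Q \<delta> Qd Ord) (B_init q0) w i"
abbreviation "S i \<equiv> fst (st i)"
abbreviation "T i \<equiv> fst (snd (st i))"
abbreviation "Rl i \<equiv> snd (snd (st i))"

lemma st_Suc: "S (Suc i) = post \<delta> (w i) (S i) \<inter> (Q - Qd) \<and>
   T (Suc i) = post \<delta> (w i) (S i \<union> T i) \<inter> Qd \<and> Rl (Suc i) = nR (S i) (T i) (Rl i) (w i)"
proof -
  obtain a b c where e: "st i = (a,b,c)" by (metis prod.exhaust)
  show ?thesis using e by (simp add: B_delta_eq)
qed

lemma st0: "S 0 = {q0}" "T 0 = {}" "Rl 0 = {}" by (simp_all add: B_init_def)

lemma inv: "T i \<subseteq> Qd \<and> sto (T i) (Rl i) \<and> S i \<subseteq> Q - Qd"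
proof (induction i)
  case 0 then show ?case using st0 q0nd basics(2) unfolding sto_def by auto
next
  case (Suc i)
  have "sto (post \<delta> (w i) (S i \<union> T i) \<inter> Qd) (nR (S i) (T i) (Rl i) (w i))"
    by (rule sto2) (use wS Suc.IH in auto)
  then show ?case using st_Suc[of i] by auto
qed

lemma finT: "finite (T i)" using inv[of i] finQd finite_subset by blast

lemma reach: "q \<in> S i \<union> T i \<Longrightarrow> \<exists>r. r 0 = q0 \<and> r i = q \<and> (\<forall>j<i. (r j, w j, r (Suc j)) \<in> \<delta>)"
proof (induction i arbitrary: q)
  case 0 then show ?case using st0 by auto
next
  case (Suc i)
  then have "q \<in> post \<delta> (w i) (S i \<union> T i)" using st_Suc[of i] by (auto simp: post_def)
  then obtain p where p: "p \<in> S i \<union> T i" "(p, w i, q) \<in> \<delta>" unfolding post_def by auto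
  obtain r where r: "r 0 = q0" "r i = p" "\<forall>j<i. (r j, w j, r (Suc j)) \<in> \<delta>" using Suc.IH[OF p(1)] by blast
  define r' where "r' = (\<lambda>j. if j \<le> i then r j else q)"
  have "\<forall>j<Suc i. (r' j, w j, r' (Suc j)) \<in> \<delta>"
  proof (intro allI impI)
    fix j assume "j < Suc i"
    then show "(r' j, w j, r' (Suc j)) \<in> \<delta>"
      using r p unfolding r'_def by (cases "j = i") auto
  qed
  moreover have "r' 0 = q0" "r' (Suc i) = q" using r by (simp_all add: r'_def)
  ultimately show ?case by blast
qed

abbreviation "Dec i \<equiv> {q \<in> T i. Ind (T (Suc i)) (Rl (Suc i)) (dsucc \<delta> q (w i)) < Ind (T i) (Rl i) q}"
abbreviation "Acc i \<equiv> {q \<in> T i. \<exists>q'\<in>T (Suc i). (q, w i, q') \<in> \<alpha>}"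
abbreviation "col i \<equiv> B_color Q \<delta> \<alpha> Qd Ord (st i) (w i)"

lemma col_eq: "col i = colf (Dec i) (Acc i) (Ind (T i) (Rl i)) (card Qd)"
proof -
  obtain a b c where e: "st i = (a,b,c)" by (metis prod.exhaust)
  obtain a' b' c' where e': "B_delta Q \<delta> Qd Ord (a,b,c) (w i) = (a',b',c')" by (metis prod.exhaust)
  have "B_color Q \<delta> \<alpha> Qd Ord (a,b,c) (w i) =
    colf {q \<in> b. Ind b' c' (dsucc \<delta> q (w i)) < Ind b c q} {q \<in> b. \<exists>q'\<in>b'. (q, w i, q') \<in> \<alpha>} (Ind b c) (card Qd)"
    unfolding B_color_def colf_def by (simp only: e' prod.case Let_def)
  moreover have "T i = b" "Rl i = c" "T (Suc i) = b'" "Rl (Suc i) = c'" using e e' by simp_all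
  ultimately show ?thesis by (simp only: e fst_conv snd_conv)
qed

lemma col_ge: "col i \<ge> -1" by (subst col_eq) (rule colf_ge)

lemma finDec: "finite (Dec i)" using finT[of i] by (rule rev_finite_subset) blast
lemma finAcc: "finite (Acc i)" using finT[of i] by (rule rev_finite_subset) blast


lemma step_facts:
  assumes q: "q \<in> T i"
  shows "Ind (T (Suc i)) (Rl (Suc i)) (dsucc \<delta> q (w i)) \<le> Ind (T i) (Rl i) q"
    "dsucc \<delta> q (w i) \<in> T (Suc i)"
    "sto (T i) (Rl i)" "T i \<subseteq> Qd"
proof -
  have a: "w i \<in> \<Sigma>" "T i \<subseteq> Qd" "sto (T i) (Rl i)" using wS inv[of i] by auto
  have "Ind (post \<delta> (w i) (S i \<union> T i) \<inter> Qd) (nR (S i) (T i) (Rl i) (w i)) (dsucc \<delta> q (w i)) \<le> Ind (T i) (Rl i) q"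
    by (rule IndA[OF a q])
  then show "Ind (T (Suc i)) (Rl (Suc i)) (dsucc \<delta> q (w i)) \<le> Ind (T i) (Rl i) q"
    using st_Suc[of i] by simp
  have "dsucc \<delta> q (w i) \<in> post \<delta> (w i) (S i \<union> T i) \<inter> Qd" by (rule fs_in[OF a q])
  then show "dsucc \<delta> q (w i) \<in> T (Suc i)" using st_Suc[of i] by simp
  show "sto (T i) (Rl i)" "T i \<subseteq> Qd" using a by auto
qed

lemma dec_up':
  assumes q: "q \<in> T i" and qq: "(q', q) \<in> Rl i" and nd: "q \<notin> Dec i"
  shows "q' \<notin> Dec i"
proof -
  have a: "w i \<in> \<Sigma>" "T i \<subseteq> Qd" "sto (T i) (Rl i)" using wS inv[of i] by auto
  have nd': "\<not> Ind (post \<delta> (w i) (S i \<union> T i) \<inter> Qd) (nR (S i) (T i) (Rl i) (w i)) (dsucc \<delta> q (w i)) < Ind (T i) (Rl i) q"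
    using nd q st_Suc[of i] by simp
  have "\<not> Ind (post \<delta> (w i) (S i \<union> T i) \<inter> Qd) (nR (S i) (T i) (Rl i) (w i)) (dsucc \<delta> q' (w i)) < Ind (T i) (Rl i) q'"
    by (rule Dec_up[OF a q qq nd'])
  then show ?thesis using st_Suc[of i] by simp
qed

lemma dir1:
  assumes run: "is_run q0 \<delta> w r" and acc: "\<exists>\<^sub>\<infinity> i. (r i, w i, r (Suc i)) \<in> \<alpha>"
  shows "\<exists>c. even c \<and> (\<exists>\<^sub>\<infinity> i. col i = c) \<and> (\<forall>c'. (\<exists>\<^sub>\<infinity> i. col i = c') \<longrightarrow> c \<le> c')"
proof -
  have r0: "r 0 = q0" and rstep: "\<And>i. (r i, w i, r (Suc i)) \<in> \<delta>" using run unfolding is_run_def by auto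
  have rin: "(r i \<in> Qd \<longrightarrow> r i \<in> T i) \<and> (r i \<notin> Qd \<longrightarrow> r i \<in> S i)" for i
  proof (induction i)
    case 0 then show ?case using r0 st0 q0nd by auto
  next
    case (Suc i)
    have s: "r i \<in> S i \<union> T i" using Suc.IH by blast
    have rq: "r (Suc i) \<in> Q" using rstep[of i] basics(3) by auto
    show ?case
    proof (cases "r (Suc i) \<in> Qd")
      case True
      then have "r (Suc i) \<in> post \<delta> (w i) (S i \<union> T i) \<inter> Qd" using s rstep[of i] unfolding post_def by blast
      then show ?thesis using st_Suc[of i] True by simp
    next
      case False
      then have "r i \<notin> Qd" using closed rstep[of i] by blast
      then have "r i \<in> S i" using Suc.IH by blast
      then have "r (Suc i) \<in> post \<delta> (w i) (S i) \<inter> (Q - Qd)" using False rq rstep[of i] unfolding post_def by blast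
      then show ?thesis using st_Suc[of i] False by simp
    qed
  qed
  obtain m where m: "(r m, w m, r (Suc m)) \<in> \<alpha>" using INFM_EX[OF acc] by blast
  then have rm: "r m \<in> Qd" using basics(6) by auto
  have rQd: "r i \<in> Qd" if "m \<le> i" for i
    using that
  proof (induction rule: dec_induct)
    case base then show ?case using rm .
  next
    case (step n) then show ?case using closed rstep[of n] by blast
  qed
  have rT: "r i \<in> T i" if "m \<le> i" for i using rin rQd that by blast
  have rsucc: "r (Suc i) = dsucc \<delta> (r i) (w i)" if "m \<le> i" for i
    using dsucc_eq[OF rQd[OF that] _ rstep[of i]] wS by blast
  define k where "k i = Ind (T i) (Rl i) (r i)" for i
  have kdec: "k (Suc i) \<le> k i" if "m \<le> i" for i
    using step_facts(1)[OF rT[OF that]] rsucc[OF that] unfolding k_def by simp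
  have kmono: "k j \<le> k i" if "i \<le> j" "m \<le> i" for i j
    using that(1)
  proof (induction rule: dec_induct)
    case base then show ?case by simp
  next
    case (step n) then show ?case using kdec[of n] that(2) by simp
  qed
  obtain M where M: "m \<le> M" "\<forall>i. m \<le> i \<longrightarrow> k M \<le> k i"
    using ex_has_least_nat[of "\<lambda>i. m \<le> i" m k] by auto
  define K where "K = k M"
  have kK: "k i = K" if "M \<le> i" for i
    using kmono[OF that M(1)] M(2) that M(1) unfolding K_def by (meson le_antisym le_trans)
  have notdec: "r i \<notin> Dec i" if "M \<le> i" for i
  proof -
    have "k (Suc i) = k i" using kK[OF that] kK[of "Suc i"] that by simp
    then show ?thesis using rsucc[of i] that M(1) unfolding k_def by simp
  qed
  have decbig: "\<forall>q\<in>Dec i. K < Ind (T i) (Rl i) q" if "M \<le> i" for i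
  proof
    fix q assume qd: "q \<in> Dec i"
    have sto: "sto (T i) (Rl i)" using inv[of i] by auto
    have ri: "r i \<in> T i" using rT that M(1) by auto
    have ki: "Ind (T i) (Rl i) (r i) = K" using kK[OF that] unfolding k_def .
    show "K < Ind (T i) (Rl i) q"
    proof (rule ccontr)
      assume "\<not> K < Ind (T i) (Rl i) q"
      then have le: "Ind (T i) (Rl i) q \<le> K" by simp
      have ne: "q \<noteq> r i" using qd notdec[OF that] by auto
      have "(q, r i) \<in> Rl i \<or> (r i, q) \<in> Rl i" using sto_tot[OF sto _ ri ne] qd by auto
      then show False
      proof
        assume "(q, r i) \<in> Rl i"
        then have "q \<notin> Dec i" using dec_up'[OF ri _ notdec[OF that]] by blast
        then show False using qd by blast
      next
        assume "(r i, q) \<in> Rl i"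
        then have "Ind (T i) (Rl i) (r i) < Ind (T i) (Rl i) q" using Ind_less[OF sto finT] by blast
        then show False using le ki by simp
      qed
    qed
  qed
  have Kle: "K \<le> card Qd"
  proof -
    have "K \<le> card (T M)" using Ind_le_card[OF _ finT rT[OF M(1)]] inv[of M] kK[of M] unfolding k_def by auto
    also have "card (T M) \<le> card Qd" using inv[of M] finQd by (intro card_mono) auto
    finally show ?thesis .
  qed
  have colodd: "2 * int K + 1 \<le> col i" if "M \<le> i" "odd (col i)" for i
    using colf_odd[OF finDec, of i "Acc i" "Ind (T i) (Rl i)" "card Qd" K] that decbig[OF that(1)] Kle col_eq[of i]
    by simp
  have colacc: "col i \<le> 2 * int K" if "M \<le> i" "(r i, w i, r (Suc i)) \<in> \<alpha>" for i
  proof -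
    have "r i \<in> Acc i" using rT[of i] rT[of "Suc i"] that M(1) by auto
    then have "colf (Dec i) (Acc i) (Ind (T i) (Rl i)) (card Qd) \<le> 2 * int (Ind (T i) (Rl i) (r i))"
      by (rule colf_A[OF finAcc])
    then show ?thesis using col_eq[of i] kK[OF that(1)] unfolding k_def by simp
  qed
  have "\<exists>\<^sub>\<infinity> i. (r i, w i, r (Suc i)) \<in> \<alpha> \<and> M \<le> i"
    using INFM_conjI[OF acc MOST_ge_nat] .
  then have inf1: "\<exists>\<^sub>\<infinity> i. \<exists>x\<in>{-1..2 * int K}. col i = x"
    by (rule INFM_mono) (use colacc col_ge in auto)
  define C where "C = {x\<in>{-1..2 * int K}. \<exists>\<^sub>\<infinity> i. col i = x}"
  have finC: "finite C" unfolding C_def by (rule finite_subset[OF _ finite_atLeastAtMost_int]) blast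
  have neC: "C \<noteq> {}" using inf1 unfolding C_def INFM_finite_Bex_distrib[OF finite_atLeastAtMost_int] by blast
  define c0 where "c0 = Min C"
  have c0C: "c0 \<in> C" unfolding c0_def using Min_in[OF finC neC] .
  have c0inf: "\<exists>\<^sub>\<infinity> i. col i = c0" and c0le: "c0 \<le> 2 * int K" using c0C unfolding C_def by auto
  have "even c0"
  proof (rule ccontr)
    assume od: "odd c0"
    obtain i where "i \<ge> M" "col i = c0" using c0inf unfolding INFM_nat_le by blast
    then show False using colodd[of i] od c0le by simp
  qed
  moreover have "\<forall>c'. (\<exists>\<^sub>\<infinity> i. col i = c') \<longrightarrow> c0 \<le> c'"
  proof (intro allI impI)
    fix c' assume ci: "\<exists>\<^sub>\<infinity> i. col i = c'"
    obtain i where "col i = c'" using INFM_EX[OF ci] by blast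
    then have ge: "-1 \<le> c'" using col_ge[of i] by simp
    show "c0 \<le> c'"
    proof (cases "c' \<le> 2 * int K")
      case True
      then have "c' \<in> C" using ge ci unfolding C_def by auto
      then show ?thesis unfolding c0_def using Min_le[OF finC] by blast
    next
      case False then show ?thesis using c0le by simp
    qed
  qed
  ultimately show ?thesis using c0inf by blast
qed


lemma dir2:
  assumes ev: "even c" and cinf: "\<exists>\<^sub>\<infinity> i. col i = c"
    and cmin: "\<forall>c'. (\<exists>\<^sub>\<infinity> i. col i = c') \<longrightarrow> c \<le> c'"
  shows "\<exists>r. is_run q0 \<delta> w r \<and> (\<exists>\<^sub>\<infinity> i. (r i, w i, r (Suc i)) \<in> \<alpha>)"
proof -
  have "\<not> (\<exists>\<^sub>\<infinity> i. \<exists>x\<in>{-1..<c}. col i = x)"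
  proof
    assume "\<exists>\<^sub>\<infinity> i. \<exists>x\<in>{-1..<c}. col i = x"
    then obtain x where "x \<in> {-1..<c}" "\<exists>\<^sub>\<infinity> i. col i = x"
      unfolding INFM_finite_Bex_distrib[OF finite_atLeastLessThan_int] by blast
    then show False using cmin by fastforce
  qed
  then obtain N where N: "\<forall>i\<ge>N. \<not> (\<exists>x\<in>{-1..<c}. col i = x)" unfolding INFM_nat_le by blast
  have cge: "c \<le> col i" if "N \<le> i" for i using N that col_ge[of i] by force
  obtain N' where N': "N \<le> N'" "col N' = c" using cinf unfolding INFM_nat_le by blast
  have ce: "Acc N' \<noteq> {} \<and> c = 2 * int (Min (Ind (T N') (Rl N') ` Acc N'))"
    using colf_even[of "Dec N'" "Acc N'" "Ind (T N') (Rl N')" "card Qd"] col_eq[of N'] N'(2) ev by simp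
  define k where "k = Min (Ind (T N') (Rl N') ` Acc N')"
  have "k \<in> Ind (T N') (Rl N') ` Acc N'" unfolding k_def using ce finAcc by (intro Min_in) auto
  then obtain p0 where p0: "p0 \<in> Acc N'" "Ind (T N') (Rl N') p0 = k" by auto
  have ck: "c = 2 * int k" using ce unfolding k_def by simp
  define p where "p = rec_nat p0 (\<lambda>j q. dsucc \<delta> q (w (N' + j)))"
  have p0': "p 0 = p0" and pS: "p (Suc j) = dsucc \<delta> (p j) (w (N' + j))" for j unfolding p_def by simp_all
  have pinv: "p j \<in> T (N' + j) \<and> Ind (T (N' + j)) (Rl (N' + j)) (p j) = k" for j
  proof (induction j)
    case 0 then show ?case using p0 p0' by simp
  next
    case (Suc j)
    let ?i = "N' + j"
    have pj: "p j \<in> T ?i" and ij: "Ind (T ?i) (Rl ?i) (p j) = k" using Suc.IH by auto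
    have "c \<le> col ?i" using cge N'(1) by simp
    have nd: "p j \<notin> Dec ?i"
    proof
      assume "p j \<in> Dec ?i"
      then have "colf (Dec ?i) (Acc ?i) (Ind (T ?i) (Rl ?i)) (card Qd) \<le> 2 * int (Ind (T ?i) (Rl ?i) (p j)) - 1"
        by (rule colf_D[OF finDec])
      then show False using \<open>c \<le> col ?i\<close> col_eq[of ?i] ij ck by simp
    qed
    have le: "Ind (T (Suc ?i)) (Rl (Suc ?i)) (dsucc \<delta> (p j) (w ?i)) \<le> k"
      using step_facts(1)[OF pj] ij by simp
    have ge: "\<not> Ind (T (Suc ?i)) (Rl (Suc ?i)) (dsucc \<delta> (p j) (w ?i)) < k"
      using nd pj ij by simp
    have "dsucc \<delta> (p j) (w ?i) \<in> T (Suc ?i)" using step_facts(2)[OF pj] .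
    then show ?case using le ge pS[of j] by simp
  qed
  have pacc: "\<exists>j>J. (p j, w (N' + j), p (Suc j)) \<in> \<alpha>" for J
  proof -
    obtain i where i: "i > N' + J" "col i = c" using cinf unfolding INFM_nat by blast
    define j where "j = i - N'"
    have ij: "i = N' + j" "j > J" using i(1) unfolding j_def by auto
    have ce': "Acc i \<noteq> {} \<and> c = 2 * int (Min (Ind (T i) (Rl i) ` Acc i))"
      using colf_even[of "Dec i" "Acc i" "Ind (T i) (Rl i)" "card Qd"] col_eq[of i] i(2) ev by simp
    then have mk: "Min (Ind (T i) (Rl i) ` Acc i) = k" using ck by simp
    have "Min (Ind (T i) (Rl i) ` Acc i) \<in> Ind (T i) (Rl i) ` Acc i" using ce' finAcc by (intro Min_in) auto
    then have "k \<in> Ind (T i) (Rl i) ` Acc i" by (simp only: mk)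
    then obtain q where q: "q \<in> Acc i" "Ind (T i) (Rl i) q = k" by blast
    have "p j \<in> T i" "Ind (T i) (Rl i) (p j) = k" using pinv[of j] ij by auto
    moreover have "sto (T i) (Rl i)" using inv[of i] by auto
    moreover have "q \<in> T i" using q(1) by auto
    ultimately have qp: "q = p j" using Ind_inj[OF _ finT[of i], where x=q and y="p j"] q(2) by auto
    obtain q' where q': "q' \<in> T (Suc i)" "(q, w i, q') \<in> \<alpha>" using q(1) by auto
    have "q \<in> Qd" using q(1) inv[of i] by auto
    then have "q' = dsucc \<delta> q (w i)" using dsucc_eq[of q "w i" q'] q'(2) basics(4) wS by blast
    then have "q' = p (Suc j)" using pS[of j] qp ij by simp
    then show ?thesis using q'(2) qp ij by auto
  qed
  have "p0 \<in> S N' \<union> T N'" using p0 by auto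
  then obtain r0 where r0: "r0 0 = q0" "r0 N' = p0" "\<forall>j<N'. (r0 j, w j, r0 (Suc j)) \<in> \<delta>"
    using reach by blast
  define r where "r i = (if i \<le> N' then r0 i else p (i - N'))" for i
  have rp: "r i = p (i - N')" if "N' \<le> i" for i
    using that r0(2) p0' unfolding r_def by (cases "i = N'") auto
  have "is_run q0 \<delta> w r"
    unfolding is_run_def
  proof (intro conjI allI)
    show "r 0 = q0" using r0 unfolding r_def by simp
  next
    fix i
    show "(r i, w i, r (Suc i)) \<in> \<delta>"
    proof (cases "i < N'")
      case True then show ?thesis using r0(3) unfolding r_def by auto
    next
      case False
      then have e1: "r i = p (i - N')" and e2: "r (Suc i) = p (Suc (i - N'))"
        using rp[of i] rp[of "Suc i"] by (auto simp: Suc_diff_le)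
      have "p (i - N') \<in> Qd" using pinv[of "i - N'"] inv[of "N' + (i - N')"] by auto
      moreover have "w (N' + (i - N')) = w i" using False by simp
      ultimately show ?thesis using e1 e2 pS[of "i - N'"] dsucc_in wS by auto
    qed
  qed
  moreover have "\<exists>\<^sub>\<infinity> i. (r i, w i, r (Suc i)) \<in> \<alpha>"
    unfolding INFM_nat
  proof
    fix J
    obtain j where j: "j > J" "(p j, w (N' + j), p (Suc j)) \<in> \<alpha>" using pacc by blast
    have "r (N' + j) = p j" "r (Suc (N' + j)) = p (Suc j)" using rp[of "N' + j"] rp[of "Suc (N' + j)"] by auto
    then show "\<exists>n>J. (r n, w n, r (Suc n)) \<in> \<alpha>" using j by (intro exI[of _ "N' + j"]) auto
  qed
  ultimately show ?thesis by blast
qed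

end
end

context ctx
begin

lemma main_eq: "nba_lang q0 \<Sigma> \<delta> \<alpha> =
         dpa_lang \<Sigma> (B_delta Q \<delta> Qd Ord) (B_init q0) (B_color Q \<delta> \<alpha> Qd Ord)"
proof
  show "nba_lang q0 \<Sigma> \<delta> \<alpha> \<subseteq> dpa_lang \<Sigma> (B_delta Q \<delta> Qd Ord) (B_init q0) (B_color Q \<delta> \<alpha> Qd Ord)"
  proof
    fix w assume "w \<in> nba_lang q0 \<Sigma> \<delta> \<alpha>"
    then obtain r where w: "\<forall>i. w i \<in> \<Sigma>" "is_run q0 \<delta> w r" "\<exists>\<^sub>\<infinity> i. (r i, w i, r (Suc i)) \<in> \<alpha>"
      unfolding nba_lang_def by blast
    show "w \<in> dpa_lang \<Sigma> (B_delta Q \<delta> Qd Ord) (B_init q0) (B_color Q \<delta> \<alpha> Qd Ord)"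
      using dir1[OF w(1) w(2) w(3)] w(1) unfolding dpa_lang_def by blast
  qed
next
  show "dpa_lang \<Sigma> (B_delta Q \<delta> Qd Ord) (B_init q0) (B_color Q \<delta> \<alpha> Qd Ord) \<subseteq> nba_lang q0 \<Sigma> \<delta> \<alpha>"
  proof
    fix w assume "w \<in> dpa_lang \<Sigma> (B_delta Q \<delta> Qd Ord) (B_init q0) (B_color Q \<delta> \<alpha> Qd Ord)"
    then obtain c where w: "\<forall>i. w i \<in> \<Sigma>" "even c"
      "\<exists>\<^sub>\<infinity> i. B_color Q \<delta> \<alpha> Qd Ord (dpa_run (B_delta Q \<delta> Qd Ord) (B_init q0) w i) (w i) = c"
      "\<forall>c'. (\<exists>\<^sub>\<infinity> i. B_color Q \<delta> \<alpha> Qd Ord (dpa_run (B_delta Q \<delta> Qd Ord) (B_init q0) w i) (w i) = c') \<longrightarrow> c \<le> c'"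
      unfolding dpa_lang_def by blast
    show "w \<in> nba_lang q0 \<Sigma> \<delta> \<alpha>"
      using dir2[OF w(1) w(2) w(3) w(4)] w(1) unfolding nba_lang_def by blast
  qed
qed

end

theorem mainTheorem3:
  fixes Q :: "'q set" and q0 :: 'q and \<Sigma> :: "'s set"
    and \<delta> \<alpha> :: "('q \<times> 's \<times> 'q) set" and Qd :: "'q set" and Ord :: "'q \<Rightarrow> enat"
  assumes "is_LDBA Q q0 \<Sigma> \<delta> \<alpha> Qd"
    and "q0 \<notin> Qd"
    and "is_ordering Q Qd Ord"
  shows "nba_lang q0 \<Sigma> \<delta> \<alpha> =
         dpa_lang \<Sigma> (B_delta Q \<delta> Qd Ord) (B_init q0) (B_color Q \<delta> \<alpha> Qd Ord)"
proof -
  interpret ctx Q q0 \<Sigma> \<delta> \<alpha> Qd Ord using assms by (rule ctx.intro)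
  show ?thesis by (rule main_eq)
qed

end
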